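(* Let $d, H, L$ be positive integers with $H$ dividing $d$, and let $\sigma>0$. Let $\bm e_1,\dots,\bm e_L \in \mathbb{R}^d$ be i.i.d. random vectors with distribution $N(0,I_d)$. For each head $h=1,\dots,H$, let $\bm W_v^{(h)} \in \mathbb{R}^{\frac{d}{H}\times d}$ be a random matrix, and let $\bm W_o \in \mathbb{R}^{d\times d}$ be a random matrix, where all entries of all these matrices are i.i.d. $N(0,\sigma^2)$ and independent of $\bm e_1,\dots,\bm e_L$. Set $\bm v_n^{(h)} = \bm W_v^{(h)} \bm e_n$. Assume the causal attention weights are uniform, i.e. for $1\le m\le L$ and every head $h$, $a_{mn}^{(h)} = \frac{1}{m}$ for $1\le n\le m$ and $a_{mn}^{(h)}=0$ for $n>m$. Define $$\bm o_m = \bm W_o\Big(\oplus_{h=1}^H \sum_{n=1}^L a_{mn}^{(h)} \bm v_n^{(h)}\Big),$$ where $\oplus$ denotes concatenation of the $H$ vectors in $\mathbb{R}^{d/H}$ into a vector in $\mathbb{R}^d$. Then for every $1\le m\le L$, $\bm o_m$ has mean zero and covariance matrix $\frac{d^2\sigma^4}{m} I_d$.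
   Context: This models the output at position $m$ of the multi-head causal self-attention module in the first layer of a randomly initialized transformer language model without positional embeddings, under the approximation that attention weights are evenly distributed over the visible positions $1,\dots,m$. $I_d$ is the $d\times d$ identity matrix. *)

theory Defs
  imports "HOL-Probability.Probability"
begin

text \<open>Indices of all Gaussian scalar random variables of the model:
  Emb n l   : component l (0 \<le> l < d) of the embedding e_n (1 \<le> n \<le> L);
  Wv h k l  : entry (k,l) of W_v^(h) (1 \<le> h \<le> H, 0 \<le> k < d/H, 0 \<le> l < d);
  Wo i j    : entry (i,j) of W_o (0 \<le> i, j < d).\<close>
datatype gidx = Emb nat nat | Wv nat nat nat | Wo nat nat

definition gauss_index_set :: "nat \<Rightarrow> nat \<Rightarrow> nat \<Rightarrow> gidx set" where
  "gauss_index_set d H L =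
     {Emb n l | n l. 1 \<le> n \<and> n \<le> L \<and> l < d}
   \<union> {Wv h k l | h k l. 1 \<le> h \<and> h \<le> H \<and> k < d div H \<and> l < d}
   \<union> {Wo i j | i j. i < d \<and> j < d}"

definition attn :: "nat \<Rightarrow> nat \<Rightarrow> real" where
  "attn m n = (if n \<le> m then 1 / real m else 0)"

definition value_vec :: "nat \<Rightarrow> (gidx \<Rightarrow> 'a \<Rightarrow> real) \<Rightarrow> nat \<Rightarrow> nat \<Rightarrow> nat \<Rightarrow> 'a \<Rightarrow> real" where
  "value_vec d X h n k \<omega> = (\<Sum>l<d. X (Wv h k l) \<omega> * X (Emb n l) \<omega>)"

text \<open>Component j (0 \<le> j < d) of the concatenation over heads h = 1..H of
  sum_{n=1}^L a_{mn}^(h) v_n^(h); head h occupies components (h-1)(d/H) .. h(d/H)-1.\<close>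
definition concat_heads :: "nat \<Rightarrow> nat \<Rightarrow> nat \<Rightarrow> (gidx \<Rightarrow> 'a \<Rightarrow> real) \<Rightarrow> nat \<Rightarrow> nat \<Rightarrow> 'a \<Rightarrow> real" where
  "concat_heads d H L X m j \<omega> =
     (\<Sum>n=1..L. attn m n * value_vec d X (j div (d div H) + 1) n (j mod (d div H)) \<omega>)"

definition attn_output :: "nat \<Rightarrow> nat \<Rightarrow> nat \<Rightarrow> (gidx \<Rightarrow> 'a \<Rightarrow> real) \<Rightarrow> nat \<Rightarrow> nat \<Rightarrow> 'a \<Rightarrow> real" where
  "attn_output d H L X m i \<omega> = (\<Sum>j<d. X (Wo i j) \<omega> * concat_heads d H L X m j \<omega>)"

end

theory Submission
  imports Defs
begin

context prob_space begin

lemma gauss_facts: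
  assumes D: "distributed M lborel Y (normal_density 0 s)" and s: "0 < s"
  shows "integrable M (\<lambda>\<omega>. Y \<omega> ^ k)" "expectation Y = 0" "expectation (\<lambda>\<omega>. Y \<omega> ^ 2) = s^2"
proof -
  show "integrable M (\<lambda>\<omega>. Y \<omega> ^ k)"
    using distributed_integrable[OF D, of "\<lambda>x. x^k"] integrable_normal_moment[of s 0 k] s by simp
  show e: "expectation Y = 0" using normal_distributed_expectation[OF s D] .
  show "expectation (\<lambda>\<omega>. Y \<omega> ^ 2) = s^2"
    using normal_distributed_variance[OF s D] e by simp
qed

lemma mset_moment:
  fixes X :: "'i \<Rightarrow> 'a \<Rightarrow> real"
  assumes indep: "indep_vars (\<lambda>_. borel) X I" and sub: "set_mset G \<subseteq> I"
    and int: "\<And>g k. g \<in> I \<Longrightarrow> integrable M (\<lambda>\<omega>. X g \<omega> ^ k)"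
  shows "integrable M (\<lambda>\<omega>. prod_mset (image_mset (\<lambda>g. X g \<omega>) G))"
    "expectation (\<lambda>\<omega>. prod_mset (image_mset (\<lambda>g. X g \<omega>) G))
       = (\<Prod>g\<in>set_mset G. expectation (\<lambda>\<omega>. X g \<omega> ^ count G g))"
proof -
  have eq: "(\<lambda>\<omega>. prod_mset (image_mset (\<lambda>g. X g \<omega>) G)) = (\<lambda>\<omega>. \<Prod>g\<in>set_mset G. X g \<omega> ^ count G g)"
    by (simp add: image_prod_mset_multiplicity)
  have pw: "\<And>n. (\<lambda>x::real. x ^ n) \<in> borel_measurable borel" by measurable
  have ind: "indep_vars (\<lambda>_. borel) (\<lambda>g \<omega>. X g \<omega> ^ count G g) (set_mset G)"
    using indep_vars_compose2[OF indep_vars_subset[OF indep sub], of "\<lambda>g x. x ^ count G g" "\<lambda>_. borel"]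
    by (simp add: pw)
  show "integrable M (\<lambda>\<omega>. prod_mset (image_mset (\<lambda>g. X g \<omega>) G))"
    unfolding eq by (rule indep_vars_integrable[OF _ ind]) (use sub int in auto)
  show "expectation (\<lambda>\<omega>. prod_mset (image_mset (\<lambda>g. X g \<omega>) G))
       = (\<Prod>g\<in>set_mset G. expectation (\<lambda>\<omega>. X g \<omega> ^ count G g))"
    unfolding eq by (rule indep_vars_lebesgue_integral[OF _ ind]) (use sub int in auto)
qed

end

lemma sum3: "(\<Sum>p\<in>A\<times>B\<times>C. f p) = (\<Sum>a\<in>A. \<Sum>b\<in>B. \<Sum>c\<in>C. (f (a,b,c)::'z::comm_monoid_add))"
  by (simp add: sum.cartesian_product)

lemma attn_sq_sum:
  assumes "1 \<le> m" "m \<le> L"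
  shows "(\<Sum>n\<in>{1..L}. (attn m n)^2) = 1 / real m"
proof -
  have "(\<Sum>n\<in>{1..L}. (attn m n)^2) = (\<Sum>n\<in>{1..L}. if n \<le> m then (1 / real m)^2 else 0)"
    by (rule sum.cong) (auto simp: attn_def)
  also have "\<dots> = (\<Sum>n\<in>{n\<in>{1..L}. n \<le> m}. (1 / real m)^2)"
    by (rule sum.inter_filter[symmetric]) simp
  also have "{n\<in>{1..L}. n \<le> m} = {1..m}" using assms by auto
  finally show ?thesis using assms by (simp add: power2_eq_square)
qed

theorem lemma3:
  fixes M :: "'a measure" and X :: "gidx \<Rightarrow> 'a \<Rightarrow> real"
    and d H L :: nat and \<sigma> :: real
  assumes "prob_space M"
    and "d > 0" and "H > 0" and "L > 0" and "H dvd d" and "\<sigma> > 0"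
    and indep: "prob_space.indep_vars M (\<lambda>_. borel) X (gauss_index_set d H L)"
    and emb: "\<And>n l. 1 \<le> n \<Longrightarrow> n \<le> L \<Longrightarrow> l < d \<Longrightarrow>
               distributed M lborel (X (Emb n l)) (normal_density 0 1)"
    and wv: "\<And>h k l. 1 \<le> h \<Longrightarrow> h \<le> H \<Longrightarrow> k < d div H \<Longrightarrow> l < d \<Longrightarrow>
               distributed M lborel (X (Wv h k l)) (normal_density 0 \<sigma>)"
    and wo: "\<And>i j. i < d \<Longrightarrow> j < d \<Longrightarrow>
               distributed M lborel (X (Wo i j)) (normal_density 0 \<sigma>)"
    and m: "1 \<le> m" "m \<le> L"
  shows "(\<forall>i<d. integrable M (attn_output d H L X m i)
                 \<and> prob_space.expectation M (attn_output d H L X m i) = 0)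
       \<and> (\<forall>i<d. \<forall>j<d.
            integrable M (\<lambda>\<omega>. (attn_output d H L X m i \<omega> - prob_space.expectation M (attn_output d H L X m i))
                             * (attn_output d H L X m j \<omega> - prob_space.expectation M (attn_output d H L X m j)))
          \<and> prob_space.expectation M
              (\<lambda>\<omega>. (attn_output d H L X m i \<omega> - prob_space.expectation M (attn_output d H L X m i))
                  * (attn_output d H L X m j \<omega> - prob_space.expectation M (attn_output d H L X m j)))
            = (if i = j then (real d)^2 * \<sigma>^4 / real m else 0))"
proof -
  interpret P: prob_space M by fact
  define I where "I = gauss_index_set d H L"
  define q where "q = d div H"
  define s where "s g = (case g of Emb _ _ \<Rightarrow> 1 | _ \<Rightarrow> \<sigma>)" for g
  have qpos: "q > 0" using assms(2,3,5) unfolding q_def by (auto elim!: dvdE)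
  have dq: "d = H * q" using assms(5) unfolding q_def by auto
  have hd: "j div q + 1 \<le> H" if "j < d" for j
  proof -
    have "j div q < H" using that dq qpos by (simp add: div_less_iff_less_mult mult.commute)
    then show ?thesis by simp
  qed
  have kd: "j mod q < q" for j using qpos by simp
  have dist: "distributed M lborel (X g) (normal_density 0 (s g)) \<and> 0 < s g" if "g \<in> I" for g
    using that emb wv wo assms(6) unfolding I_def gauss_index_set_def s_def by auto
  have intk: "integrable M (\<lambda>\<omega>. X g \<omega> ^ k)" if "g \<in> I" for g k
    using P.gauss_facts(1)[of "X g" "s g"] dist[OF that] by auto
  have e1: "P.expectation (X g) = 0" if "g \<in> I" for g
    using P.gauss_facts(2)[of "X g" "s g"] dist[OF that] by auto
  have e2: "P.expectation (\<lambda>\<omega>. X g \<omega> ^ 2) = (s g)^2" if "g \<in> I" for g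
    using P.gauss_facts(3)[of "X g" "s g"] dist[OF that] by auto
  have ind: "P.indep_vars (\<lambda>_. borel) X I" using indep unfolding I_def .
  note mm = P.mset_moment[OF ind _ intk]
  have zero: "P.expectation (\<lambda>\<omega>. prod_mset (image_mset (\<lambda>g. X g \<omega>) G)) = 0"
    if "set_mset G \<subseteq> I" "g \<in># G" "count G g = 1" for G g
  proof -
    have "P.expectation (\<lambda>\<omega>. X g \<omega> ^ count G g) = 0" using that e1 by auto
    then show ?thesis using mm(2)[OF that(1)] that(2) by (auto simp: prod_zero_iff)
  qed
  define S where "S = {..<d} \<times> {1..L} \<times> {..<d}"
  define T where "T i p \<omega> = (case p of (j, n, l) \<Rightarrow>
      X (Wo i j) \<omega> * X (Wv (j div q + 1) (j mod q) l) \<omega> * X (Emb n l) \<omega>)" for i p \<omega>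
  define c where "c p = (case p of (j, n, l) \<Rightarrow> attn m n)" for p :: "nat \<times> nat \<times> nat"
  have memb: "Wo i j \<in> I \<and> Wv (j div q + 1) (j mod q) l \<in> I \<and> Emb n l \<in> I"
    if "i < d" "(j, n, l) \<in> S" for i j n l
    using that hd kd unfolding I_def gauss_index_set_def S_def q_def by auto
  have T3: "integrable M (T i p) \<and> P.expectation (T i p) = 0" if "i < d" "p \<in> S" for i p
  proof -
    obtain j n l where p: "p = (j, n, l)" by (cases p) auto
    define G where "G = {# Wo i j, Wv (j div q + 1) (j mod q) l, Emb n l #}"
    have GI: "set_mset G \<subseteq> I" using memb[OF that(1)] that(2) unfolding p G_def by auto
    have eq: "T i p = (\<lambda>\<omega>. prod_mset (image_mset (\<lambda>g. X g \<omega>) G))"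
      unfolding T_def p G_def by (auto simp: mult_ac)
    show ?thesis unfolding eq using mm(1)[OF GI] zero[OF GI, of "Wo i j"] by (simp add: G_def)
  qed
  have T6: "integrable M (\<lambda>\<omega>. T i p \<omega> * T i' p' \<omega>) \<and>
      P.expectation (\<lambda>\<omega>. T i p \<omega> * T i' p' \<omega>) = (if i = i' \<and> p = p' then \<sigma>^4 else 0)"
    if "i < d" "p \<in> S" "i' < d" "p' \<in> S" for i p i' p'
  proof -
    obtain j n l where p: "p = (j, n, l)" by (cases p) auto
    obtain j' n' l' where p': "p' = (j', n', l')" by (cases p') auto
    define a where "a = Wo i j"
    define b where "b = Wv (j div q + 1) (j mod q) l"
    define e where "e = Emb n l"
    define a' where "a' = Wo i' j'"
    define b' where "b' = Wv (j' div q + 1) (j' mod q) l'"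
    define e' where "e' = Emb n' l'"
    define G where "G = {# a, b, e, a', b', e' #}"
    have GI: "set_mset G \<subseteq> I" using memb[OF that(1)] memb[OF that(3)] that(2,4)
      unfolding p p' G_def a_def b_def e_def a'_def b'_def e'_def by auto
    have eq: "(\<lambda>\<omega>. T i p \<omega> * T i' p' \<omega>) = (\<lambda>\<omega>. prod_mset (image_mset (\<lambda>g. X g \<omega>) G))"
      unfolding T_def p p' G_def a_def b_def e_def a'_def b'_def e'_def by (auto simp: mult_ac)
    have E: "P.expectation (\<lambda>\<omega>. prod_mset (image_mset (\<lambda>g. X g \<omega>) G))
        = (if i = i' \<and> p = p' then \<sigma>^4 else 0)"
    proof (cases "i = i' \<and> p = p'")
      case True
      then have G: "G = {# a, a, b, b, e, e #}" unfolding G_def a_def a'_def b_def b'_def e_def e'_def p p'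
        by (simp add: add_mset_commute)
      have dis: "a \<noteq> b" "a \<noteq> e" "b \<noteq> e" unfolding a_def b_def e_def by auto
      have "a \<in> I" "b \<in> I" "e \<in> I" using GI unfolding G by auto
      then show ?thesis using mm(2)[OF GI] dis True e2
        by (simp add: G s_def a_def b_def e_def power2_eq_square power4_eq_xxxx)
    next
      case False
      then have "a \<noteq> a' \<or> b \<noteq> b' \<or> e \<noteq> e'"
        unfolding a_def a'_def b_def b'_def e_def e'_def p p' by auto
      then show ?thesis
      proof (elim disjE)
        assume ne: "a \<noteq> a'"
        have "count G a = 1" using ne unfolding G_def
          by (auto simp: a_def b_def e_def a'_def b'_def e'_def)
        moreover have "a \<in># G" by (simp add: G_def)
        ultimately show ?thesis using zero[OF GI, of a] False by auto
      next
        assume ne: "b \<noteq> b'"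
        have "count G b = 1" using ne unfolding G_def
          by (auto simp: a_def b_def e_def a'_def b'_def e'_def)
        moreover have "b \<in># G" by (simp add: G_def)
        ultimately show ?thesis using zero[OF GI, of b] False by auto
      next
        assume ne: "e \<noteq> e'"
        have "count G e = 1" using ne unfolding G_def
          by (auto simp: a_def b_def e_def a'_def b'_def e'_def)
        moreover have "e \<in># G" by (simp add: G_def)
        ultimately show ?thesis using zero[OF GI, of e] False by auto
      qed
    qed
    show ?thesis unfolding eq using mm(1)[OF GI] E by simp
  qed
  have expand: "attn_output d H L X m i = (\<lambda>\<omega>. \<Sum>p\<in>S. c p * T i p \<omega>)" for i
    unfolding attn_output_def concat_heads_def value_vec_def S_def c_def T_def q_def
    unfolding sum3 by (auto simp: sum_distrib_left mult_ac)
  have finS: "finite S" unfolding S_def by simp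
  have o1: "integrable M (attn_output d H L X m i) \<and> P.expectation (attn_output d H L X m i) = 0"
    if "i < d" for i
  proof -
    have "integrable M (\<lambda>\<omega>. \<Sum>p\<in>S. c p * T i p \<omega>)"
      using T3[OF that] by (intro Bochner_Integration.integrable_sum integrable_mult_right) auto
    moreover have "P.expectation (\<lambda>\<omega>. \<Sum>p\<in>S. c p * T i p \<omega>) = 0"
      using T3[OF that] by (subst Bochner_Integration.integral_sum) auto
    ultimately show ?thesis unfolding expand by simp
  qed
  have csum: "(\<Sum>p\<in>S. c p * c p) = real d * real d / real m"
  proof -
    have "(\<Sum>p\<in>S. c p * c p) = real d * (real d * (\<Sum>n\<in>{1..L}. (attn m n)^2))"
      unfolding S_def sum3 c_def by (simp add: power2_eq_square sum_distrib_left)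
    then show ?thesis using attn_sq_sum[OF m] by simp
  qed
  have o2: "integrable M (\<lambda>\<omega>. attn_output d H L X m i \<omega> * attn_output d H L X m i' \<omega>) \<and>
     P.expectation (\<lambda>\<omega>. attn_output d H L X m i \<omega> * attn_output d H L X m i' \<omega>)
      = (if i = i' then (real d)^2 * \<sigma>^4 / real m else 0)"
    if "i < d" "i' < d" for i i'
  proof -
    have eq: "(\<lambda>\<omega>. attn_output d H L X m i \<omega> * attn_output d H L X m i' \<omega>)
       = (\<lambda>\<omega>. \<Sum>p\<in>S. \<Sum>p'\<in>S. c p * c p' * (T i p \<omega> * T i' p' \<omega>))"
      unfolding expand sum_product by (intro ext sum.cong refl) (simp add: mult_ac)
    have "integrable M (\<lambda>\<omega>. \<Sum>p\<in>S. \<Sum>p'\<in>S. c p * c p' * (T i p \<omega> * T i' p' \<omega>))"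
      using T6[OF that(1) _ that(2)] by (intro Bochner_Integration.integrable_sum integrable_mult_right) auto
    moreover have "P.expectation (\<lambda>\<omega>. \<Sum>p\<in>S. \<Sum>p'\<in>S. c p * c p' * (T i p \<omega> * T i' p' \<omega>))
      = (\<Sum>p\<in>S. \<Sum>p'\<in>S. c p * c p' * (if i = i' \<and> p = p' then \<sigma>^4 else 0))"
      using T6[OF that(1) _ that(2)]
      by (simp add: Bochner_Integration.integral_sum Bochner_Integration.integrable_sum integrable_mult_right)
    moreover have "(\<Sum>p\<in>S. \<Sum>p'\<in>S. c p * c p' * (if i = i' \<and> p = p' then \<sigma>^4 else 0))
       = (if i = i' then (real d)^2 * \<sigma>^4 / real m else 0)"
    proof (cases "i = i'")
      case True
      have "(\<Sum>p\<in>S. \<Sum>p'\<in>S. c p * c p' * (if i = i' \<and> p = p' then \<sigma>^4 else 0))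
          = (\<Sum>p\<in>S. c p * c p * \<sigma>^4)"
      proof (rule sum.cong)
        fix p assume pS: "p \<in> S"
        have "(\<Sum>p'\<in>S. c p * c p' * (if i = i' \<and> p = p' then \<sigma>^4 else 0))
            = (\<Sum>p'\<in>S. if p = p' then c p * c p' * \<sigma>^4 else 0)"
          using True by (intro sum.cong) auto
        also have "\<dots> = c p * c p * \<sigma>^4" using pS finS by simp
        finally show "(\<Sum>p'\<in>S. c p * c p' * (if i = i' \<and> p = p' then \<sigma>^4 else 0)) = c p * c p * \<sigma>^4" .
      qed simp
      also have "\<dots> = (\<Sum>p\<in>S. c p * c p) * \<sigma>^4" by (simp add: sum_distrib_right)
      finally show ?thesis using True csum by (simp add: power2_eq_square)
    qed simp
    ultimately show ?thesis unfolding eq by simp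
  qed
  show ?thesis using o1 o2 by simp
qed

end
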